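(* If $\mathcal C$ is a Baker class, then $\mathcal C^{(d)}$ is a Baker class for every integer $d\ge1$.
   Context: A layering of a graph $G$ is a function $\lambda:V(G)\to\mathbb{Z}$ with $|\lambda(u)-\lambda(v)|\le1$ for every edge $uv$; its width is $\sup_{i\in\mathbb Z}|\lambda^{-1}(i)|$. For $P\subseteq V(G)$, a layering $\lambda$ of $G[P]$ is $G$-geodesic if $d_G(x,y)\ge|\lambda(x)-\lambda(y)|$ for all $x,y\in P$ ($d_G$ the distance in $G$, $\infty$ between different components). An ordered graph is a finite graph with a linear ordering of its vertices; subgraphs inherit the restricted ordering. For an infinite sequence $\mathbf r=r_1,r_2,\dots$ of positive integers and an integer $s\ge0$, let $\mathrm{tail}_s(\mathbf r)=r_{s+1},r_{s+2},\dots$, $\mathrm{tail}(\mathbf r)=\mathrm{tail}_1(\mathbf r)$ and $\mathrm{head}(\mathbf r)=r_1$. The Baker game between Destroyer and Preserver has states $(G,\mathbf r)$ with $G$ an ordered graph and $\mathbf r$ an infinite sequence of positive integers. If $V(G)=\emptyset$ the game stops. Otherwise, in one round Destroyer chooses either Delete (the smallest vertex $v$ of $G$ is removed and the game proceeds to $(G-v,\mathrm{tail}(\mathbf r))$) or Restrict (Destroyer chooses a layering $\lambda$ of $G$, Preserver chooses an interval $I$ of at most $\mathrm{head}(\mathbf r)$ consecutive integers, and the game proceeds to $(G[\lambda^{-1}(I)],\mathrm{tail}(\mathbf r))$). Destroyer wins on $(G,\mathbf r)$ in $t$ rounds if he has a strategy such that, regardless of Preserver's choices, the game stops after at most $t$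 rounds. A class $\mathcal C$ of ordered graphs is a Baker class if for every infinite sequence $\mathbf r$ of positive integers there is an integer $t$ such that for every $G\in\mathcal C$, Destroyer wins the Baker game on $(G,\mathbf r)$ in $t$ rounds. A partition $\mathcal P$ of an ordered graph $G$ (ordering $\prec$) is a sequence $P_1,\dots,P_m$ of pairwise disjoint sets with union $V(G)$ such that $u\prec v$ whenever $u\in P_i$, $v\in P_j$, $i<j$. It is width-$d$ geodesic if for each $i\in\{1,\dots,m\}$, $G[P_i]$ has a $G[P_i\cup P_{i+1}\cup\dots\cup P_m]$-geodesic layering of width at most $d$. $G/\mathcal P$ is the ordered graph obtained from $G$ by identifying the vertices of each part into a single vertex and suppressing loops and parallel edges, with vertices ordered as the sequence of parts. $\mathcal C^{(d)}$ is the class of ordered graphs $G$ having a width-$d$ geodesic partition $\mathcal P$ with $G/\mathcal P\in\mathcal C$. *)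

theory Defs
  imports "HOL-Library.Extended_Nat"
begin

text \<open>Ordered graphs: finite vertex set of naturals (ordered by the natural order
  on nat) and a set of 2-element edges inside the vertex set.\<close>
type_synonym ograph = "nat set \<times> nat set set"

definition verts :: "ograph \<Rightarrow> nat set" where "verts G = fst G"
definition edges :: "ograph \<Rightarrow> nat set set" where "edges G = snd G"

definition is_ograph :: "ograph \<Rightarrow> bool" where
  "is_ograph G \<longleftrightarrow> finite (verts G) \<and>
     (\<forall>e\<in>edges G. \<exists>u v. u \<noteq> v \<and> e = {u, v} \<and> u \<in> verts G \<and> v \<in> verts G)"

definition induced :: "ograph \<Rightarrow> nat set \<Rightarrow> ograph" where
  "induced G S = (verts G \<inter> S, {e \<in> edges G. e \<subseteq> S})"

definition delete_min :: "ograph \<Rightarrow> ograph" where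
  "delete_min G = (verts G - {Min (verts G)}, {e \<in> edges G. Min (verts G) \<notin> e})"

definition is_layering :: "ograph \<Rightarrow> (nat \<Rightarrow> int) \<Rightarrow> bool" where
  "is_layering G L \<longleftrightarrow> (\<forall>u v. {u, v} \<in> edges G \<longrightarrow> \<bar>L u - L v\<bar> \<le> 1)"

definition layering_width_le :: "ograph \<Rightarrow> (nat \<Rightarrow> int) \<Rightarrow> nat \<Rightarrow> bool" where
  "layering_width_le G L d \<longleftrightarrow> (\<forall>i::int. card {v \<in> verts G. L v = i} \<le> d)"

definition adj :: "ograph \<Rightarrow> (nat \<times> nat) set" where
  "adj G = {(u, v). {u, v} \<in> edges G}"

definition gdist :: "ograph \<Rightarrow> nat \<Rightarrow> nat \<Rightarrow> enat" where
  "gdist G x y = (if \<exists>k. (x, y) \<in> (adj G) ^^ k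
                  then enat (LEAST k. (x, y) \<in> (adj G) ^^ k) else \<infinity>)"

definition geodesic_layering :: "ograph \<Rightarrow> nat set \<Rightarrow> (nat \<Rightarrow> int) \<Rightarrow> bool" where
  "geodesic_layering H P L \<longleftrightarrow> is_layering (induced H P) L \<and>
     (\<forall>x\<in>P. \<forall>y\<in>P. enat (nat \<bar>L x - L y\<bar>) \<le> gdist H x y)"

definition tail :: "(nat \<Rightarrow> nat) \<Rightarrow> nat \<Rightarrow> nat" where
  "tail r = (\<lambda>i. r (Suc i))"

definition head :: "(nat \<Rightarrow> nat) \<Rightarrow> nat" where
  "head r = r 0"

primrec destroyer_wins :: "nat \<Rightarrow> ograph \<Rightarrow> (nat \<Rightarrow> nat) \<Rightarrow> bool" where
  "destroyer_wins 0 G r \<longleftrightarrow> verts G = {}"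
| "destroyer_wins (Suc t) G r \<longleftrightarrow> verts G = {} \<or>
     destroyer_wins t (delete_min G) (tail r) \<or>
     (\<exists>L. is_layering G L \<and>
        (\<forall>a::int. \<forall>k::nat. k \<le> head r \<longrightarrow>
           destroyer_wins t (induced G {v. L v \<in> {a..<a + int k}}) (tail r)))"

definition baker_class :: "ograph set \<Rightarrow> bool" where
  "baker_class C \<longleftrightarrow> (\<forall>r::nat \<Rightarrow> nat. (\<forall>i. 0 < r i) \<longrightarrow>
      (\<exists>t. \<forall>G\<in>C. destroyer_wins t G r))"

definition is_partition :: "ograph \<Rightarrow> nat set list \<Rightarrow> bool" where
  "is_partition G P \<longleftrightarrow> (\<forall>i<length P. P ! i \<noteq> {}) \<and>
     (\<forall>i<length P. \<forall>j<length P. i \<noteq> j \<longrightarrow> P ! i \<inter> P ! j = {}) \<and>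
     \<Union> (set P) = verts G \<and>
     (\<forall>i j u v. i < j \<and> j < length P \<and> u \<in> P ! i \<and> v \<in> P ! j \<longrightarrow> u < v)"

definition geodesic_partition :: "nat \<Rightarrow> ograph \<Rightarrow> nat set list \<Rightarrow> bool" where
  "geodesic_partition d G P \<longleftrightarrow> is_partition G P \<and>
     (\<forall>i<length P. \<exists>L.
        geodesic_layering (induced G (\<Union>j\<in>{i..<length P}. P ! j)) (P ! i) L \<and>
        layering_width_le (induced G (P ! i)) L d)"

definition quotient :: "ograph \<Rightarrow> nat set list \<Rightarrow> ograph" where
  "quotient G P = ({0..<length P},
     {{i, j} | i j. i < length P \<and> j < length P \<and> i \<noteq> j \<and>
        (\<exists>u\<in>P ! i. \<exists>v\<in>P ! j. {u, v} \<in> edges G)})"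

definition ord_iso :: "ograph \<Rightarrow> ograph \<Rightarrow> bool" where
  "ord_iso G H \<longleftrightarrow> (\<exists>f. bij_betw f (verts G) (verts H) \<and> strict_mono_on (verts G) f \<and>
     (\<forall>u\<in>verts G. \<forall>v\<in>verts G. {u, v} \<in> edges G \<longleftrightarrow> {f u, f v} \<in> edges H))"

text \<open>C^(d); G/P is compared with members of C up to order-isomorphism\<close>
definition geo_closure :: "ograph set \<Rightarrow> nat \<Rightarrow> ograph set" where
  "geo_closure C d = {G. is_ograph G \<and>
     (\<exists>P. geodesic_partition d G P \<and> (\<exists>H\<in>C. ord_iso (quotient G P) H))}"

end

theory Submission
  imports Defs
begin


lemma verts_induced[simp]: "verts (induced G S) = verts G \<inter> S"
  by (simp add: induced_def verts_def)
lemma edges_induced[simp]: "edges (induced G S) = {e\<in>edges G. e \<subseteq> S}"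
  by (simp add: induced_def edges_def)
lemma induced_induced: "induced (induced G A) B = induced G (A \<inter> B)"
  unfolding induced_def verts_def edges_def by auto
lemma delete_min_eq: "delete_min G = induced G (-{Min (verts G)})"
  unfolding delete_min_def induced_def by auto
lemma induced_UNIV: "induced G UNIV = G"
  unfolding induced_def verts_def edges_def by simp

lemma ograph_edge_sub: "is_ograph G \<Longrightarrow> e \<in> edges G \<Longrightarrow> e \<subseteq> verts G"
  unfolding is_ograph_def by fastforce
lemma ograph_edge: "is_ograph G \<Longrightarrow> {u,v} \<in> edges G \<Longrightarrow> u \<in> verts G \<and> v \<in> verts G"
  using ograph_edge_sub by blast
lemma ograph_induced: assumes og: "is_ograph G" shows "is_ograph (induced G S)"
  unfolding is_ograph_def
proof (intro conjI ballI)
  show "finite (verts (induced G S))" using og unfolding is_ograph_def by simp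
  fix e assume "e \<in> edges (induced G S)"
  then have e: "e \<in> edges G" "e \<subseteq> S" by auto
  then obtain u v where uv: "u \<noteq> v" "e = {u, v}" "u \<in> verts G" "v \<in> verts G" using og unfolding is_ograph_def by blast
  then show "\<exists>u v. u \<noteq> v \<and> e = {u, v} \<and> u \<in> verts (induced G S) \<and> v \<in> verts (induced G S)"
    using e(2) by auto
qed

lemma induced_all: assumes "is_ograph G" "verts G \<subseteq> S" shows "induced G S = G"
proof -
  have "{e\<in>edges G. e \<subseteq> S} = edges G" using ograph_edge_sub[OF assms(1)] assms(2) by blast
  moreover have "verts G \<inter> S = verts G" using assms(2) by blast
  ultimately show ?thesis unfolding induced_def verts_def edges_def by simp
qed

lemma induced_cong: assumes "is_ograph G" "verts G \<inter> S = verts G \<inter> T" shows "induced G S = induced G T"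
proof -
  have "{e\<in>edges G. e \<subseteq> S} = {e\<in>edges G. e \<subseteq> T}" using ograph_edge_sub[OF assms(1)] assms(2) by blast
  then show ?thesis using assms(2) unfolding induced_def by simp
qed

lemma wins_empty: "verts G = {} \<Longrightarrow> destroyer_wins n G r"
  by (cases n) auto

lemma wins_pass: assumes "destroyer_wins n G (tail r)" shows "destroyer_wins (Suc n) G r"
proof -
  have "\<forall>a k. k \<le> head r \<longrightarrow> destroyer_wins n (induced G {v. (\<lambda>_. 0::int) v \<in> {a..<a + int k}}) (tail r)"
  proof (intro allI impI)
    fix a :: int and k :: nat
    show "destroyer_wins n (induced G {v. (\<lambda>_. 0::int) v \<in> {a..<a + int k}}) (tail r)"
    proof (cases "(0::int) \<in> {a..<a + int k}")
      case True
      then have eq: "{v. (\<lambda>_. 0::int) v \<in> {a..<a + int k}} = UNIV" by auto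
      show ?thesis unfolding eq induced_UNIV using assms .
    next
      case False
      then have eq: "{v. (\<lambda>_. 0::int) v \<in> {a..<a + int k}} = {}" by auto
      show ?thesis unfolding eq by (rule wins_empty) simp
    qed
  qed
  moreover have "is_layering G (\<lambda>_. 0)" by (simp add: is_layering_def)
  ultimately show ?thesis by auto
qed

lemma wins_pad: "destroyer_wins n G (\<lambda>i. r (i + m)) \<Longrightarrow> destroyer_wins (m + n) G r"
proof (induction m arbitrary: r)
  case 0 then show ?case by simp
next
  case (Suc m)
  have "(\<lambda>i. r (i + Suc m)) = (\<lambda>i. tail r (i + m))" by (simp add: tail_def)
  then have "destroyer_wins (m + n) G (tail r)" using Suc by simp
  then show ?case using wins_pass by simp
qed

lemma wins_delete:
  "finite (verts G) \<Longrightarrow> finite X \<Longrightarrow> X \<subseteq> verts G \<Longrightarrow> (\<forall>x\<in>X. \<forall>y\<in>verts G - X. x < y)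
   \<Longrightarrow> destroyer_wins n (induced G (-X)) (\<lambda>i. r (i + card X)) \<Longrightarrow> destroyer_wins (card X + n) G r"
proof (induction "card X" arbitrary: G X r)
  case 0
  then have "X = {}" by simp
  then show ?case using 0 induced_UNIV by simp
next
  case (Suc c)
  then have Xne: "X \<noteq> {}" by auto
  define m where "m = Min (verts G)"
  have mX: "m \<in> X"
  proof (rule ccontr)
    assume "m \<notin> X"
    obtain x where x: "x \<in> X" using Xne by blast
    have "m \<in> verts G" unfolding m_def using Suc.prems Xne by (intro Min_in) auto
    then have "x < m" using Suc.prems(4) x \<open>m \<notin> X\<close> by blast
    moreover have "m \<le> x" unfolding m_def using Suc.prems x by (intro Min_le) auto
    ultimately show False by simp
  qed
  define X' where "X' = X - {m}"
  have cX': "c = card X'" unfolding X'_def using Suc.hyps(2) Suc.prems(2) mX by simp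
  have dm: "delete_min G = induced G (-{m})" unfolding m_def by (rule delete_min_eq)
  have ind: "induced (delete_min G) (-X') = induced G (-X)"
  proof -
    have "-{m} \<inter> -X' = -X" unfolding X'_def using mX by auto
    then show ?thesis unfolding dm induced_induced by simp
  qed
  have cXX: "card X = Suc (card X')" using cX' Suc.hyps(2) by simp
  have shift: "(\<lambda>i. r (i + card X)) = (\<lambda>i. tail r (i + card X'))" unfolding cXX by (simp add: tail_def)
  have "destroyer_wins (card X' + n) (delete_min G) (tail r)"
  proof (rule Suc.hyps(1))
    show "c = card X'" by (rule cX')
    show "finite (verts (delete_min G))" using Suc.prems(1) dm by simp
    show "finite X'" using Suc.prems(2) X'_def by simp
    show "X' \<subseteq> verts (delete_min G)" using Suc.prems(3) dm X'_def by auto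
    show "\<forall>x\<in>X'. \<forall>y\<in>verts (delete_min G) - X'. x < y" using Suc.prems(4) dm X'_def by auto
    show "destroyer_wins n (induced (delete_min G) (- X')) (\<lambda>i. tail r (i + card X'))"
      using ind shift Suc.prems(5) by simp
  qed
  then show ?case using cXX by simp
qed



lemma relpow_mono': "(R::('a\<times>'a) set) \<subseteq> S \<Longrightarrow> R ^^ k \<subseteq> S ^^ k"
  by (induction k) (simp_all add: relcomp_mono)

lemma gdist_le: "(x,y) \<in> adj G ^^ k \<Longrightarrow> gdist G x y \<le> enat k"
  unfolding gdist_def by (auto intro: Least_le)

lemma adj_mono: "edges G' \<subseteq> edges G \<Longrightarrow> adj G' \<subseteq> adj G"
  unfolding adj_def by auto

lemma gdist_mono: assumes "adj G' \<subseteq> adj G" shows "gdist G x y \<le> gdist G' x y"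
proof (cases "\<exists>k. (x, y) \<in> adj G' ^^ k")
  case True
  define k where "k = (LEAST k. (x, y) \<in> adj G' ^^ k)"
  have "(x, y) \<in> adj G' ^^ k" unfolding k_def using True by (rule LeastI_ex)
  then have "(x, y) \<in> adj G ^^ k" using relpow_mono'[OF assms] by blast
  then have "gdist G x y \<le> enat k" by (rule gdist_le)
  moreover have "gdist G' x y = enat k" unfolding gdist_def k_def using True by simp
  ultimately show ?thesis by simp
next
  case False
  then show ?thesis unfolding gdist_def[of G'] by simp
qed

lemma geo_mono:
  assumes g: "geodesic_layering H P L" and e: "edges H' \<subseteq> edges H" and p: "P' \<subseteq> P"
  shows "geodesic_layering H' P' L"
proof -
  have l: "is_layering (induced H P) L" and d: "\<forall>x\<in>P. \<forall>y\<in>P. enat (nat \<bar>L x - L y\<bar>) \<le> gdist H x y"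
    using g unfolding geodesic_layering_def by auto
  have "is_layering (induced H' P') L"
    unfolding is_layering_def
  proof (intro allI impI)
    fix u v assume "{u, v} \<in> edges (induced H' P')"
    then have "{u, v} \<in> edges (induced H P)" using e p by auto
    then show "\<bar>L u - L v\<bar> \<le> 1" using l unfolding is_layering_def by blast
  qed
  moreover have "\<forall>x\<in>P'. \<forall>y\<in>P'. enat (nat \<bar>L x - L y\<bar>) \<le> gdist H' x y"
  proof (intro ballI)
    fix x y assume "x \<in> P'" "y \<in> P'"
    then have "enat (nat \<bar>L x - L y\<bar>) \<le> gdist H x y" using d p by blast
    also have "\<dots> \<le> gdist H' x y" by (rule gdist_mono[OF adj_mono[OF e]])
    finally show "enat (nat \<bar>L x - L y\<bar>) \<le> gdist H' x y" .
  qed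
  ultimately show ?thesis unfolding geodesic_layering_def by blast
qed

lemma width_mono:
  assumes a: "layering_width_le G1 L d" "finite (verts G1)" "verts G2 \<subseteq> verts G1"
  shows "layering_width_le G2 L d"
  unfolding layering_width_le_def
proof (intro allI)
  fix i
  have "card {v \<in> verts G2. L v = i} \<le> card {v \<in> verts G1. L v = i}"
    by (rule card_mono) (use a in auto)
  moreover have "card {v \<in> verts G1. L v = i} \<le> d" using a(1) unfolding layering_width_le_def by blast
  ultimately show "card {v \<in> verts G2. L v = i} \<le> d" by linarith
qed

definition relG :: "nat \<Rightarrow> (nat \<Rightarrow> nat) \<Rightarrow> ograph \<Rightarrow> ograph \<Rightarrow> bool" where
  "relG d \<phi> G H \<longleftrightarrow> (\<forall>v\<in>verts G. \<phi> v \<in> verts H) \<and>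
     (\<forall>u\<in>verts G. \<forall>v\<in>verts G. u < v \<longrightarrow> \<phi> u \<le> \<phi> v) \<and>
     (\<forall>u v. {u,v} \<in> edges G \<longrightarrow> \<phi> u \<noteq> \<phi> v \<longrightarrow> {\<phi> u, \<phi> v} \<in> edges H) \<and>
     (\<forall>h. \<exists>L. geodesic_layering (induced G {v. h \<le> \<phi> v}) {v\<in>verts G. \<phi> v = h} L \<and>
              layering_width_le (induced G {v. \<phi> v = h}) L d)"

lemma rel_induced:
  assumes rel: "relG d \<phi> G H" and og: "is_ograph G"
    and c1: "\<forall>v \<in> verts G \<inter> S. \<phi> v \<in> verts H'"
    and c2: "\<forall>u v. {u,v} \<in> edges G \<longrightarrow> u \<in> S \<longrightarrow> v \<in> S \<longrightarrow> \<phi> u \<noteq> \<phi> v \<longrightarrow> {\<phi> u, \<phi> v} \<in> edges H'"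
  shows "relG d \<phi> (induced G S) H'"
  unfolding relG_def
proof (intro conjI allI)
  show "\<forall>v\<in>verts (induced G S). \<phi> v \<in> verts H'" using c1 by simp
  show "\<forall>u\<in>verts (induced G S). \<forall>v\<in>verts (induced G S). u < v \<longrightarrow> \<phi> u \<le> \<phi> v"
    using rel unfolding relG_def by simp
  fix u v show "{u, v} \<in> edges (induced G S) \<longrightarrow> \<phi> u \<noteq> \<phi> v \<longrightarrow> {\<phi> u, \<phi> v} \<in> edges H'"
    using c2 by simp
next
  fix h
  obtain L where g: "geodesic_layering (induced G {v. h \<le> \<phi> v}) {v\<in>verts G. \<phi> v = h} L"
    and w: "layering_width_le (induced G {v. \<phi> v = h}) L d"
    using rel unfolding relG_def by blast
  have "geodesic_layering (induced (induced G S) {v. h \<le> \<phi> v}) {v\<in>verts (induced G S). \<phi> v = h} L"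
    by (rule geo_mono[OF g]) auto
  moreover have "layering_width_le (induced (induced G S) {v. \<phi> v = h}) L d"
    by (rule width_mono[OF w]) (use og is_ograph_def in auto)
  ultimately show "\<exists>L. geodesic_layering (induced (induced G S) {v. h \<le> \<phi> v}) {v \<in> verts (induced G S). \<phi> v = h} L \<and>
          layering_width_le (induced (induced G S) {v. \<phi> v = h}) L d" by blast
qed

primrec BB :: "nat \<Rightarrow> nat \<Rightarrow> (nat \<Rightarrow> nat) \<Rightarrow> nat" where
  "BB d 0 r = 0"
| "BB d (Suc j) r = Suc (d * r 0) + BB d j (\<lambda>i. r (i + Suc (d * r 0)))"

definition rr :: "nat \<Rightarrow> (nat \<Rightarrow> nat) \<Rightarrow> nat \<Rightarrow> nat" where
  "rr d r = (\<lambda>j. r (BB d j r))"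

lemma tail_rr: "tail (rr d r) = rr d (\<lambda>i. r (i + Suc (d * r 0)))"
  unfolding tail_def rr_def by (simp add: add.commute)

lemma head_rr: "head (rr d r) = r 0"
  unfolding head_def rr_def by simp



lemma extend_layering:
  assumes og: "is_ograph G" and finF: "finite F"
    and dist: "\<And>x y k. x \<in> F \<Longrightarrow> y \<in> F \<Longrightarrow> (x, y) \<in> adj G ^^ k \<Longrightarrow> \<bar>L0 x - L0 y\<bar> \<le> int k"
  shows "\<exists>L'. is_layering G L' \<and> (\<forall>v\<in>F. L' v = L0 v)"
proof -
  define c where "c = Min (L0 ` F)"
  define W where "W v n \<longleftrightarrow> (\<exists>x\<in>F. \<exists>k. (x, v) \<in> adj G ^^ k \<and> n = nat (L0 x - c) + k)" for v n
  define L' where "L' v = (if \<exists>n. W v n then c + int (LEAST n. W v n) else 0)" for v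
  have Wstep: "W v (Suc n)" if uv: "(u,v) \<in> adj G" and wu: "W u n" for u v n
  proof -
    obtain x k where "x \<in> F" "(x, u) \<in> adj G ^^ k" "n = nat (L0 x - c) + k" using wu unfolding W_def by blast
    moreover have "(x, v) \<in> adj G ^^ Suc k" using relpow_Suc_I calculation(2) uv by metis
    ultimately show ?thesis unfolding W_def by (intro bexI[of _ x] exI[of _ "Suc k"]) simp_all
  qed
  have adjs: "(u,v) \<in> adj G" "(v,u) \<in> adj G" if e0: "{u,v} \<in> edges G" for u v
  proof -
    show "(u,v) \<in> adj G" using e0 unfolding adj_def by simp
    have "{v,u} \<in> edges G" using e0 by (simp add: insert_commute)
    then show "(v,u) \<in> adj G" unfolding adj_def by simp
  qed
  have lay: "is_layering G L'"
    unfolding is_layering_def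
  proof (intro allI impI)
    fix u v assume e: "{u,v} \<in> edges G"
    show "\<bar>L' u - L' v\<bar> \<le> 1"
    proof (cases "\<exists>n. W u n")
      case True
      then have Tv: "\<exists>n. W v n" using Wstep[OF adjs(1)[OF e]] by blast
      define nu where "nu = (LEAST n. W u n)"
      define nv where "nv = (LEAST n. W v n)"
      have "W u nu" unfolding nu_def using True by (rule LeastI_ex)
      then have "W v (Suc nu)" by (rule Wstep[OF adjs(1)[OF e]])
      then have 1: "nv \<le> Suc nu" unfolding nv_def by (rule Least_le)
      have "W v nv" unfolding nv_def using Tv by (rule LeastI_ex)
      then have "W u (Suc nv)" by (rule Wstep[OF adjs(2)[OF e]])
      then have 2: "nu \<le> Suc nv" unfolding nu_def by (rule Least_le)
      have "L' u = c + int nu" "L' v = c + int nv" using True Tv unfolding L'_def nu_def nv_def by simp_all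
      then show ?thesis using 1 2 by simp
    next
      case False
      then have "\<not> (\<exists>n. W v n)" using Wstep[OF adjs(2)[OF e]] by blast
      then have "L' u = 0" "L' v = 0" using False unfolding L'_def by auto
      then show ?thesis by simp
    qed
  qed
  have agree: "L' v = L0 v" if vF: "v \<in> F" for v
  proof -
    have cle: "c \<le> L0 x" if "x \<in> F" for x unfolding c_def using finF that by simp
    have Wv: "W v (nat (L0 v - c))" unfolding W_def using vF by (intro bexI[of _ v] exI[of _ 0]) auto
    have "(LEAST n. W v n) = nat (L0 v - c)"
    proof (rule Least_equality)
      show "W v (nat (L0 v - c))" by (rule Wv)
      fix n assume "W v n"
      then obtain x k where x: "x \<in> F" "(x, v) \<in> adj G ^^ k" "n = nat (L0 x - c) + k" unfolding W_def by blast
      have "\<bar>L0 x - L0 v\<bar> \<le> int k" using dist[OF x(1) vF x(2)] .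
      then show "nat (L0 v - c) \<le> n" using x(3) cle[OF x(1)] cle[OF vF] by linarith
    qed
    moreover have "L' v = c + int (LEAST n. W v n)" using Wv unfolding L'_def by auto
    ultimately show ?thesis using cle[OF vF] by simp
  qed
  show ?thesis using lay agree by blast
qed

lemma main:
  "destroyer_wins t H r' \<Longrightarrow> r' = rr d r \<Longrightarrow> is_ograph G \<Longrightarrow> finite (verts H) \<Longrightarrow> relG d \<phi> G H
   \<Longrightarrow> destroyer_wins (BB d t r) G r"
proof (induction t arbitrary: H r' r G)
  case 0
  then have "verts G = {}" unfolding relG_def by auto
  then show ?case by (rule wins_empty)
next
  case (Suc t)
  define s where "s = (\<lambda>i. r (i + Suc (d * r 0)))"
  have BBs: "BB d (Suc t) r = Suc (d * r 0 + BB d t s)" by (simp add: s_def)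
  have tr: "tail r' = rr d s" using Suc.prems(2) tail_rr s_def by simp
  have hr: "head r' = r 0" using Suc.prems(2) head_rr by simp
  have og: "is_ograph G" by (rule Suc.prems(3))
  have finG: "finite (verts G)" using og is_ograph_def by blast
  have rel: "relG d \<phi> G H" by (rule Suc.prems(5))
  have phiV: "\<And>v. v \<in> verts G \<Longrightarrow> \<phi> v \<in> verts H" using rel unfolding relG_def by blast
  have mono: "\<And>u v. u \<in> verts G \<Longrightarrow> v \<in> verts G \<Longrightarrow> u < v \<Longrightarrow> \<phi> u \<le> \<phi> v" using rel unfolding relG_def by blast
  have edg: "\<And>u v. {u,v} \<in> edges G \<Longrightarrow> \<phi> u \<noteq> \<phi> v \<Longrightarrow> {\<phi> u, \<phi> v} \<in> edges H" using rel unfolding relG_def by blast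
  have cases: "verts H = {} \<or> destroyer_wins t (delete_min H) (rr d s) \<or>
     (\<exists>Lh. is_layering H Lh \<and> (\<forall>a k. k \<le> r 0 \<longrightarrow> destroyer_wins t (induced H {v. Lh v \<in> {a..<a + int k}}) (rr d s)))"
    using Suc.prems(1) tr hr by simp
  show ?case
  proof (cases "verts H = {}")
    case True
    then have "verts G = {}" using phiV by blast
    then show ?thesis by (rule wins_empty)
  next
    case Hne: False
    show ?thesis
    proof (cases "destroyer_wins t (delete_min H) (rr d s)")
      case DEL: True
      define h0 where "h0 = Min (verts H)"
      have h0le: "\<And>v. v \<in> verts G \<Longrightarrow> h0 \<le> \<phi> v" unfolding h0_def using phiV Suc.prems(4) by simp
      define F where "F = {v \<in> verts G. \<phi> v = h0}"
      obtain L0 where geo: "geodesic_layering (induced G {v. h0 \<le> \<phi> v}) F L0"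
        and wid: "layering_width_le (induced G {v. \<phi> v = h0}) L0 d"
        using rel unfolding relG_def F_def by blast
      have Gall: "induced G {v. h0 \<le> \<phi> v} = G" using og h0le by (intro induced_all) auto
      have dist: "\<bar>L0 x - L0 y\<bar> \<le> int k" if "x \<in> F" "y \<in> F" "(x, y) \<in> adj G ^^ k" for x y k
      proof -
        have "enat (nat \<bar>L0 x - L0 y\<bar>) \<le> gdist G x y" using geo that(1,2) Gall unfolding geodesic_layering_def by metis
        also have "\<dots> \<le> enat k" using that(3) by (rule gdist_le)
        finally show ?thesis by simp
      qed
      have finF: "finite F" unfolding F_def using finG by simp
      have "\<exists>L'. is_layering G L' \<and> (\<forall>v\<in>F. L' v = L0 v)"
      proof (rule extend_layering[OF og finF])
        fix x y k assume "x \<in> F" "y \<in> F" "(x, y) \<in> adj G ^^ k"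
        then show "\<bar>L0 x - L0 y\<bar> \<le> int k" by (rule dist)
      qed
      then obtain L' where lay: "is_layering G L'" and agree: "\<forall>v\<in>F. L' v = L0 v" by blast
      have "\<forall>a k. k \<le> head r \<longrightarrow> destroyer_wins (d * r 0 + BB d t s) (induced G {v. L' v \<in> {a..<a + int k}}) (tail r)"
      proof (intro allI impI)
        fix a :: int and k :: nat assume kr: "k \<le> head r"
        define Wn where "Wn = {v. L' v \<in> {a..<a + int k}}"
        define G1 where "G1 = induced G Wn"
        define X where "X = {v \<in> verts G1. \<phi> v = h0}"
        have finX: "finite X" unfolding X_def G1_def using finG by simp
        have Xsub: "X \<subseteq> (\<Union>i\<in>{a..<a + int k}. {v \<in> verts (induced G {v. \<phi> v = h0}). L0 v = i})"
          unfolding X_def G1_def Wn_def using agree F_def by auto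
        have "card X \<le> card (\<Union>i\<in>{a..<a + int k}. {v \<in> verts (induced G {v. \<phi> v = h0}). L0 v = i})"
          by (rule card_mono[OF _ Xsub]) (use finG in auto)
        also have "\<dots> \<le> (\<Sum>i\<in>{a..<a + int k}. card {v \<in> verts (induced G {v. \<phi> v = h0}). L0 v = i})"
          by (rule card_UN_le) simp
        also have "\<dots> \<le> of_nat (card {a..<a + int k}) * d"
          by (rule sum_bounded_above) (use wid layering_width_le_def in blast)
        also have "\<dots> = k * d" by simp
        also have "\<dots> \<le> d * r 0" using kr head_def by simp
        finally have cX: "card X \<le> d * r 0" .
        define G2 where "G2 = induced G1 (-X)"
        have G2eq: "G2 = induced G (Wn \<inter> -X)" unfolding G2_def G1_def induced_induced ..
        have vdm: "verts (delete_min H) = verts H - {h0}" unfolding delete_min_def verts_def h0_def by simp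
        have edm: "edges (delete_min H) = {e \<in> edges H. h0 \<notin> e}" unfolding delete_min_def edges_def h0_def verts_def by simp
        have rel2: "relG d \<phi> G2 (delete_min H)"
          unfolding G2eq
        proof (rule rel_induced[OF rel og])
          show "\<forall>v\<in>verts G \<inter> (Wn \<inter> - X). \<phi> v \<in> verts (delete_min H)"
            using phiV unfolding vdm X_def G1_def by auto
          show "\<forall>u v. {u, v} \<in> edges G \<longrightarrow> u \<in> Wn \<inter> - X \<longrightarrow> v \<in> Wn \<inter> - X \<longrightarrow> \<phi> u \<noteq> \<phi> v \<longrightarrow> {\<phi> u, \<phi> v} \<in> edges (delete_min H)"
          proof (intro allI impI)
            fix u v assume e: "{u, v} \<in> edges G" and uS: "u \<in> Wn \<inter> - X" and vS: "v \<in> Wn \<inter> - X" and ne: "\<phi> u \<noteq> \<phi> v"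
            have "u \<in> verts G" "v \<in> verts G" using ograph_edge[OF og e] by auto
            then have "\<phi> u \<noteq> h0" "\<phi> v \<noteq> h0" using uS vS unfolding X_def G1_def by auto
            then show "{\<phi> u, \<phi> v} \<in> edges (delete_min H)" using edg[OF e ne] unfolding edm by auto
          qed
        qed
        have ih: "destroyer_wins (BB d t s) G2 s"
          by (rule Suc.IH[OF DEL refl]) (use og G2eq ograph_induced Suc.prems(4) vdm rel2 in auto)
        have seq: "(\<lambda>i. r (i + (d * r 0 - card X) + Suc (card X))) = s" using cX unfolding s_def by auto
        have p: "destroyer_wins ((d * r 0 - card X) + BB d t s) G2 (\<lambda>i. r (i + Suc (card X)))"
          by (rule wins_pad) (use ih seq in simp)
        have down: "\<forall>x\<in>X. \<forall>y\<in>verts G1 - X. x < y"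
        proof (intro ballI)
          fix x y assume x: "x \<in> X" and y: "y \<in> verts G1 - X"
          have yG: "y \<in> verts G" "\<phi> y \<noteq> h0" using y unfolding X_def G1_def by auto
          have xG: "x \<in> verts G" "\<phi> x = h0" using x unfolding X_def G1_def by auto
          have "h0 < \<phi> y" using h0le[OF yG(1)] yG(2) by simp
          then show "x < y" using mono[OF yG(1) xG(1)] xG(2) by (cases "y < x"; cases "y = x") auto
        qed
        have "destroyer_wins (card X + ((d * r 0 - card X) + BB d t s)) G1 (tail r)"
          by (rule wins_delete) (use finG finX down p G2_def G1_def X_def in \<open>auto simp: tail_def\<close>)
        then show "destroyer_wins (d * r 0 + BB d t s) (induced G {v. L' v \<in> {a..<a + int k}}) (tail r)"
          using cX unfolding G1_def Wn_def by simp
      qed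
      then show ?thesis unfolding BBs using lay by auto
    next
      case NDEL: False
      then obtain Lh where layH: "is_layering H Lh"
        and win: "\<forall>a k. k \<le> r 0 \<longrightarrow> destroyer_wins t (induced H {v. Lh v \<in> {a..<a + int k}}) (rr d s)"
        using cases Hne by blast
      define L where "L v = Lh (\<phi> v)" for v
      have lay: "is_layering G L"
        unfolding is_layering_def L_def
      proof (intro allI impI)
        fix u v assume e: "{u,v} \<in> edges G"
        show "\<bar>Lh (\<phi> u) - Lh (\<phi> v)\<bar> \<le> 1"
        proof (cases "\<phi> u = \<phi> v")
          case False then show ?thesis using edg[OF e] layH unfolding is_layering_def by blast
        qed simp
      qed
      have "\<forall>a k. k \<le> head r \<longrightarrow> destroyer_wins (d * r 0 + BB d t s) (induced G {v. L v \<in> {a..<a + int k}}) (tail r)"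
      proof (intro allI impI)
        fix a :: int and k :: nat assume kr: "k \<le> head r"
        define I where "I = {a..<a + int k}"
        have rel1: "relG d \<phi> (induced G {v. L v \<in> I}) (induced H {h. Lh h \<in> I})"
        proof (rule rel_induced[OF rel og])
          show "\<forall>v\<in>verts G \<inter> {v. L v \<in> I}. \<phi> v \<in> verts (induced H {h. Lh h \<in> I})"
            using phiV L_def by auto
          show "\<forall>u v. {u, v} \<in> edges G \<longrightarrow> u \<in> {v. L v \<in> I} \<longrightarrow> v \<in> {v. L v \<in> I} \<longrightarrow> \<phi> u \<noteq> \<phi> v \<longrightarrow> {\<phi> u, \<phi> v} \<in> edges (induced H {h. Lh h \<in> I})"
            using edg L_def by auto
        qed
        have ih: "destroyer_wins (BB d t s) (induced G {v. L v \<in> I}) s"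
          by (rule Suc.IH[of "induced H {h. Lh h \<in> I}" "rr d s"]) (use win kr head_def I_def og ograph_induced Suc.prems(4) rel1 in auto)
        have seq: "(\<lambda>i. tail r (i + d * r 0)) = s" unfolding s_def tail_def by auto
        show "destroyer_wins (d * r 0 + BB d t s) (induced G {v. L v \<in> {a..<a + int k}}) (tail r)"
          by (rule wins_pad) (use ih seq I_def in simp)
      qed
      then show ?thesis unfolding BBs using lay by auto
    qed
  qed
qed



theorem mainTheorem5:
  fixes C :: "ograph set" and d :: nat
  assumes "\<forall>G\<in>C. is_ograph G"
    and "baker_class C"
    and "1 \<le> d"
  shows "baker_class (geo_closure C d)"
  unfolding baker_class_def
proof (intro allI impI)
  fix r :: "nat \<Rightarrow> nat" assume rpos: "\<forall>i. 0 < r i"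
  have "\<forall>i. 0 < rr d r i" unfolding rr_def using rpos by simp
  then obtain t where t: "\<forall>H\<in>C. destroyer_wins t H (rr d r)" using assms(2) unfolding baker_class_def by blast
  show "\<exists>t. \<forall>G\<in>geo_closure C d. destroyer_wins t G r"
  proof (intro exI ballI)
    fix G assume "G \<in> geo_closure C d"
    then obtain P H where og: "is_ograph G" and gp: "geodesic_partition d G P" and HC: "H \<in> C"
      and iso: "ord_iso (quotient G P) H" unfolding geo_closure_def by blast
    define n where "n = length P"
    have vq: "verts (quotient G P) = {0..<n}" unfolding quotient_def verts_def n_def by simp
    have eq: "edges (quotient G P) = {{i, j} | i j. i < n \<and> j < n \<and> i \<noteq> j \<and>
        (\<exists>u\<in>P ! i. \<exists>v\<in>P ! j. {u, v} \<in> edges G)}" unfolding quotient_def edges_def n_def by simp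
    obtain f where bij: "bij_betw f {0..<n} (verts H)" and sm: "strict_mono_on {0..<n} f"
      and eiff: "\<forall>u\<in>{0..<n}. \<forall>v\<in>{0..<n}. {u, v} \<in> edges (quotient G P) \<longleftrightarrow> {f u, f v} \<in> edges H"
      using iso unfolding ord_iso_def vq by blast
    have injf: "inj_on f {0..<n}" using bij bij_betw_imp_inj_on by blast
    have surjf: "f ` {0..<n} = verts H" using bij bij_betw_imp_surj_on by blast
    have smf: "\<And>i j. i < n \<Longrightarrow> j < n \<Longrightarrow> i < j \<Longrightarrow> f i < f j" using sm unfolding strict_mono_on_def by simp
    have pd: "\<And>i j. i < n \<Longrightarrow> j < n \<Longrightarrow> i \<noteq> j \<Longrightarrow> P ! i \<inter> P ! j = {}"
      using gp unfolding geodesic_partition_def is_partition_def n_def by blast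
    have pu: "\<Union> (set P) = verts G" using gp unfolding geodesic_partition_def is_partition_def by blast
    have po: "\<And>i j u v. i < j \<Longrightarrow> j < n \<Longrightarrow> u \<in> P ! i \<Longrightarrow> v \<in> P ! j \<Longrightarrow> u < v"
      using gp unfolding geodesic_partition_def is_partition_def n_def by blast
    have Psub: "\<And>i. i < n \<Longrightarrow> P ! i \<subseteq> verts G" using pu unfolding n_def by (metis Union_upper nth_mem)
    have ex: "\<exists>i<n. v \<in> P ! i" if "v \<in> verts G" for v
      using that pu unfolding n_def by (metis UnionE in_set_conv_nth)
    define idx where "idx v = (THE i. i < n \<and> v \<in> P ! i)" for v
    have idx_eq: "idx v = i" if "i < n" "v \<in> P ! i" for i v
      unfolding idx_def
    proof (rule the_equality)
      show "i < n \<and> v \<in> P ! i" using that by simp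
      fix j assume "j < n \<and> v \<in> P ! j"
      then show "j = i" using pd[of i j] that by blast
    qed
    have idx: "idx v < n \<and> v \<in> P ! (idx v)" if "v \<in> verts G" for v
      using ex[OF that] idx_eq by metis
    define \<phi> where "\<phi> v = f (idx v)" for v
    have rel: "relG d \<phi> G H"
      unfolding relG_def
    proof (intro conjI allI ballI impI)
      fix v assume "v \<in> verts G"
      then show "\<phi> v \<in> verts H" unfolding \<phi>_def using idx surjf by auto
    next
      fix u v assume u: "u \<in> verts G" and v: "v \<in> verts G" and uv: "u < v"
      have "\<not> idx v < idx u"
      proof
        assume "idx v < idx u"
        then have "v < u" using po idx[OF u] idx[OF v] by blast
        then show False using uv by simp
      qed
      then have "idx u = idx v \<or> idx u < idx v" by auto
      then show "\<phi> u \<le> \<phi> v" unfolding \<phi>_def using smf idx[OF u] idx[OF v] by (metis order.strict_implies_order order_refl)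
    next
      fix u v assume e: "{u, v} \<in> edges G" and ne: "\<phi> u \<noteq> \<phi> v"
      have u: "u \<in> verts G" and v: "v \<in> verts G" using ograph_edge[OF og e] by auto
      have "idx u \<noteq> idx v" using ne unfolding \<phi>_def by auto
      then have "{idx u, idx v} \<in> edges (quotient G P)" unfolding eq using idx[OF u] idx[OF v] e by blast
      then show "{\<phi> u, \<phi> v} \<in> edges H" unfolding \<phi>_def using eiff idx[OF u] idx[OF v] by simp
    next
      fix h
      show "\<exists>L. geodesic_layering (induced G {v. h \<le> \<phi> v}) {v \<in> verts G. \<phi> v = h} L \<and>
               layering_width_le (induced G {v. \<phi> v = h}) L d"
      proof (cases "\<exists>v0\<in>verts G. \<phi> v0 = h")
        case True
        then obtain v0 where v0: "v0 \<in> verts G" "\<phi> v0 = h" by blast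
        define i where "i = idx v0"
        have i: "i < n" "h = f i" using idx[OF v0(1)] v0(2) unfolding i_def \<phi>_def by auto
        obtain L where g: "geodesic_layering (induced G (\<Union>j\<in>{i..<n}. P ! j)) (P ! i) L"
          and w: "layering_width_le (induced G (P ! i)) L d"
          using gp i(1) unfolding geodesic_partition_def n_def by blast
        have fib: "{v \<in> verts G. \<phi> v = h} = P ! i"
        proof
          show "{v \<in> verts G. \<phi> v = h} \<subseteq> P ! i"
          proof
            fix v assume "v \<in> {v \<in> verts G. \<phi> v = h}"
            then have v: "v \<in> verts G" "f (idx v) = f i" unfolding i(2) \<phi>_def by simp_all
            then have "idx v = i" using injf idx[OF v(1)] i(1) unfolding inj_on_def by simp
            then show "v \<in> P ! i" using idx[OF v(1)] by simp
          qed
          show "P ! i \<subseteq> {v \<in> verts G. \<phi> v = h}"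
            using Psub[OF i(1)] idx_eq[OF i(1)] i(2) unfolding \<phi>_def by auto
        qed
        have up: "verts G \<inter> {v. h \<le> \<phi> v} = verts G \<inter> (\<Union>j\<in>{i..<n}. P ! j)"
        proof (intro equalityI subsetI)
          fix v assume a: "v \<in> verts G \<inter> {v. h \<le> \<phi> v}"
          have v1: "v \<in> verts G" using a by blast
          have "h \<le> \<phi> v" using a by blast
          then have v2: "f i \<le> f (idx v)" using i(2) \<phi>_def by metis
          note v = v1 v2
          have "\<not> idx v < i"
          proof
            assume "idx v < i" then have "f (idx v) < f i" using smf[OF conjunct1[OF idx[OF v(1)]] i(1)] by blast
            then show False using v(2) by simp
          qed
          then show "v \<in> verts G \<inter> (\<Union>j\<in>{i..<n}. P ! j)" using v(1) idx[OF v(1)] by auto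
        next
          fix v assume "v \<in> verts G \<inter> (\<Union>j\<in>{i..<n}. P ! j)"
          then obtain j where v: "v \<in> verts G" "i \<le> j" "j < n" "v \<in> P ! j" by auto
          have "idx v = j" using idx_eq v by blast
          moreover have "f i \<le> f j" using v(2,3) smf[of i j] by (cases "i = j") auto
          ultimately show "v \<in> verts G \<inter> {v. h \<le> \<phi> v}" using v(1) i(2) unfolding \<phi>_def by auto
        qed
        have fibv: "verts G \<inter> {v. \<phi> v = h} = verts G \<inter> P ! i" using fib by blast
        have A: "induced G {v. h \<le> \<phi> v} = induced G (\<Union>j\<in>{i..<n}. P ! j)" using induced_cong[OF og up] .
        have B: "induced G {v. \<phi> v = h} = induced G (P ! i)" using induced_cong[OF og fibv] .
        show ?thesis unfolding A B fib using g w by blast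
      next
        case False
        have emp: "{v \<in> verts G. \<phi> v = h} = {}" using False by blast
        have "geodesic_layering (induced G {v. h \<le> \<phi> v}) {v \<in> verts G. \<phi> v = h} (\<lambda>_. 0)"
          unfolding emp geodesic_layering_def is_layering_def by simp
        moreover have "verts (induced G {v. \<phi> v = h}) = {}" using emp by auto
        then have "layering_width_le (induced G {v. \<phi> v = h}) (\<lambda>_. 0) d"
          unfolding layering_width_le_def by simp
        ultimately show ?thesis by blast
      qed
    qed
    have finH: "finite (verts H)" using assms(1) HC unfolding is_ograph_def by blast
    show "destroyer_wins (BB d t r) G r"
      using main[OF _ refl og finH rel] t HC by blast
  qed
qed


end
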